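(* Let $\Omega$ and $\widetilde{\Omega}$ be Polish spaces and let $\mathcal{P}:\Omega \twoheadrightarrow \mathfrak{P}(\widetilde{\Omega})$ be a non-empty-valued random set such that $\mathrm{graph}(\mathcal{P})=\{(\omega,P)\in\Omega\times\mathfrak{P}(\widetilde{\Omega}):\ P\in\mathcal{P}(\omega)\}$ is an analytic subset of $\Omega\times\mathfrak{P}(\widetilde{\Omega})$. Let $\mathcal{C}$ be a subclass of the open subsets of $\mathbb{R}^d$ and let $X:\Omega\times\widetilde{\Omega}\to\mathbb{R}^d$ be $\mathcal{C}$-analytically measurable. Then $\mathrm{supp}_{\mathcal{P}}X$ is a non-empty, closed-valued and $\mathcal{C}$-analytically measurable random set.
   Context: $\mathfrak{P}(E)$ denotes the set of Borel probability measures on a Polish space $E$, endowed with the weak topology; $\mathcal{A}(E)$ denotes the analytic subsets of $E$ (continuous images of Polish spaces). A random variable $X:\Omega\times\widetilde\Omega\to\mathbb{R}^d$ is $\mathcal{C}$-analytically measurable if $X^{-1}(C)\in\mathcal{A}(\Omega\times\widetilde\Omega)$ for all $C\in\mathcal{C}$. A random set $J:\Omega\twoheadrightarrow\mathbb{R}^d$ is $\mathcal{C}$-analytically measurable if $\{\omega\in\Omega:\ J(\omega)\cap C\neq\emptyset\}\in\mathcal{A}(\Omega)$ for all $C\in\mathcal{C}$. The quasi-sure support is the random set $\mathrm{supp}_{\mathcal{P}}X(\omega):=\bigcap\{F\subset\mathbb{R}^d \text{ closed}:\ P(X(\omega,\cdot)\in F)=1\ \forall P\in\mathcal{P}(\omega)\}$.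 *)

theory Defs
  imports "HOL-Probability.Probability"
begin

definition Polish_space :: "'a topology \<Rightarrow> bool" where
  "Polish_space T \<longleftrightarrow> completely_metrizable_space T \<and> separable_space T"

text \<open>Every Polish space has cardinality at most the continuum, hence is homeomorphic
  to a Polish space carried by a subset of the type nat => real; so we quantify over
  Polish topologies on that carrier type.\<close>
definition analytic_in :: "'a topology \<Rightarrow> 'a set \<Rightarrow> bool" where
  "analytic_in E A \<longleftrightarrow>
     (\<exists>(T :: (nat \<Rightarrow> real) topology) f.
        Polish_space T \<and> continuous_map T E f \<and> f ` topspace T = A)"

definition prob_measures :: "'b::topological_space measure set" where
  "prob_measures = {P. sets P = sets borel \<and> prob_space P}"

definition weak_topology :: "'b::topological_space measure topology" where
  "weak_topology = topology_generated_by
     (insert prob_measures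
       {{P \<in> prob_measures. integral\<^sup>L P f \<in> U} | (f :: 'b \<Rightarrow> real) U.
          continuous_on UNIV f \<and> bounded (range f) \<and> open U})"

text \<open>Quasi-sure support. Probabilities of events are taken w.r.t. the completion of P
  (analytic sets are universally measurable).\<close>
definition qs_supp ::
  "('a \<Rightarrow> 'b measure set) \<Rightarrow> ('a \<times> 'b \<Rightarrow> 'c::topological_space) \<Rightarrow> 'a \<Rightarrow> 'c set" where
  "qs_supp \<P> X \<omega> = \<Inter>{F. closed F \<and>
      (\<forall>P\<in>\<P> \<omega>. measure (completion P) {y. X (\<omega>, y) \<in> F} = 1)}"

end

theory Submission
  imports Defs
begin

definition om :: "'b measure \<Rightarrow> 'b set \<Rightarrow> real" where
  "om P E = Inf {measure P B | B. B \<in> sets P \<and> E \<subseteq> B}"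

context prob_space
begin

lemma om_bdd: "bdd_below {measure M B | B. B \<in> sets M \<and> E \<subseteq> B}"
  by (rule bdd_belowI[of _ 0]) auto

lemma om_ne: "E \<subseteq> space M \<Longrightarrow> {measure M B | B. B \<in> sets M \<and> E \<subseteq> B} \<noteq> {}"
  by auto

lemma om_le: "B \<in> sets M \<Longrightarrow> E \<subseteq> B \<Longrightarrow> om M E \<le> measure M B"
  unfolding om_def by (rule cInf_lower[OF _ om_bdd]) auto

lemma om_ge: "E \<subseteq> space M \<Longrightarrow> (\<And>B. B \<in> sets M \<Longrightarrow> E \<subseteq> B \<Longrightarrow> c \<le> measure M B) \<Longrightarrow> c \<le> om M E"
  unfolding om_def by (rule cInf_greatest[OF om_ne]) auto

lemma om_nonneg: "E \<subseteq> space M \<Longrightarrow> 0 \<le> om M E"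
  by (rule om_ge) auto

lemma om_hull:
  assumes E: "E \<subseteq> space M"
  obtains H where "H \<in> sets M" "E \<subseteq> H" "measure M H = om M E"
proof -
  have "\<forall>n. \<exists>B. B \<in> sets M \<and> E \<subseteq> B \<and> measure M B < om M E + 1 / real (Suc n)"
  proof
    fix n
    have "Inf {measure M B | B. B \<in> sets M \<and> E \<subseteq> B} < om M E + 1 / real (Suc n)"
      unfolding om_def by simp
    from cInf_lessD[OF om_ne[OF E] this] show "\<exists>B. B \<in> sets M \<and> E \<subseteq> B \<and> measure M B < om M E + 1 / real (Suc n)"
      by auto
  qed
  then obtain B where B: "\<And>n. B n \<in> sets M" "\<And>n. E \<subseteq> B n" "\<And>n. measure M (B n) < om M E + 1 / real (Suc n)"
    by metis
  define H where "H = (\<Inter>n. B n)"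
  have Hs: "H \<in> sets M" unfolding H_def using B(1) by auto
  have EH: "E \<subseteq> H" unfolding H_def using B(2) by auto
  have le: "measure M H \<le> om M E + 1 / real (Suc n)" for n
  proof -
    have "measure M H \<le> measure M (B n)"
      using B(1) Hs by (intro finite_measure_mono) (auto simp: H_def)
    then show ?thesis using B(3)[of n] by simp
  qed
  have "measure M H \<le> om M E"
  proof (rule field_le_epsilon)
    fix e :: real assume "0 < e"
    then obtain n where "1 / real (Suc n) < e"
      using nat_approx_posE by blast
    then show "measure M H \<le> om M E + e" using le[of n] by simp
  qed
  moreover have "om M E \<le> measure M H" using om_le[OF Hs EH] .
  ultimately show ?thesis using that Hs EH by simp
qed

lemma om_mono: "E \<subseteq> F \<Longrightarrow> F \<subseteq> space M \<Longrightarrow> om M E \<le> om M F"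
proof -
  assume a: "E \<subseteq> F" "F \<subseteq> space M"
  obtain H where H: "H \<in> sets M" "F \<subseteq> H" "measure M H = om M F" using om_hull[OF a(2)] by blast
  show ?thesis using om_le[OF H(1)] a H by auto
qed

lemma om_sets: "E \<in> sets M \<Longrightarrow> om M E = measure M E"
  by (rule antisym) (auto intro!: om_le om_ge finite_measure_mono sets.sets_into_space)

lemma om_completion:
  assumes "E \<in> sets (completion M)"
  shows "measure (completion M) E \<le> om M E"
proof -
  have E: "E \<subseteq> space M" using sets.sets_into_space[OF assms] by simp
  interpret C: prob_space "completion M" by (rule prob_space_completion)
  show ?thesis
  proof (rule om_ge[OF E])
    fix B assume "B \<in> sets M" "E \<subseteq> B"
    then show "measure (completion M) E \<le> measure M B"
      using C.finite_measure_mono[of E B] assms by simp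
  qed
qed

lemma om_incseq:
  assumes inc: "incseq E" and sp: "\<And>n. E n \<subseteq> space M" and c: "c < om M (\<Union>n. E n)"
  shows "\<exists>n. c < om M (E n)"
proof (rule ccontr)
  assume "\<not> ?thesis"
  then have le: "\<And>n. om M (E n) \<le> c" by (simp add: not_less)
  have "\<forall>n. \<exists>H. H \<in> sets M \<and> E n \<subseteq> H \<and> measure M H = om M (E n)"
    using om_hull[OF sp] by metis
  then obtain H where H: "\<And>n. H n \<in> sets M" "\<And>n. E n \<subseteq> H n" "\<And>n. measure M (H n) = om M (E n)"
    by metis
  define H' where "H' n = (\<Inter>m\<in>{n..}. H m)" for n
  have H's: "H' n \<in> sets M" for n unfolding H'_def using H(1) by auto
  have EH': "E n \<subseteq> H' n" for n
    unfolding H'_def using H(2) inc by (auto dest: incseqD)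
  have H'inc: "incseq H'" unfolding H'_def incseq_def by auto
  have mH': "measure M (H' n) \<le> c" for n
  proof -
    have "measure M (H' n) \<le> measure M (H n)"
      using H's H(1) by (intro finite_measure_mono) (auto simp: H'_def)
    then show ?thesis using H(3) le by (metis order_trans)
  qed
  have lim: "(\<lambda>n. measure M (H' n)) \<longlonglongrightarrow> measure M (\<Union>n. H' n)"
    using H's H'inc by (intro finite_Lim_measure_incseq) auto
  have "measure M (\<Union>n. H' n) \<le> c"
    using lim mH' by (intro LIMSEQ_le_const2) auto
  moreover have "om M (\<Union>n. E n) \<le> measure M (\<Union>n. H' n)"
    using H's EH' by (intro om_le) auto
  ultimately show False using c by simp
qed

end


definition sec :: "('a \<times> 'b) set \<Rightarrow> 'a \<Rightarrow> 'b set" where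
  "sec Z w = {y. (w, y) \<in> Z}"

context Metric_space
begin
lemma mtotally_bounded_centres:
  assumes "S \<subseteq> M" and "\<And>e. e > 0 \<Longrightarrow> \<exists>K. finite K \<and> K \<subseteq> M \<and> S \<subseteq> (\<Union>c\<in>K. mball c e)"
  shows "mtotally_bounded S"
  unfolding mtotally_bounded_def
proof (intro allI impI)
  fix e :: real assume e: "e > 0"
  obtain K where K: "finite K" "K \<subseteq> M" "S \<subseteq> (\<Union>c\<in>K. mball c (e/2))"
    using assms(2)[of "e/2"] e by auto
  define K' where "K' = {c\<in>K. mball c (e/2) \<inter> S \<noteq> {}}"
  have "\<forall>c\<in>K'. \<exists>y. y \<in> mball c (e/2) \<inter> S" unfolding K'_def by blast
  from bchoice[OF this] obtain r where r0: "\<forall>c\<in>K'. r c \<in> mball c (e/2) \<inter> S" by blast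
  have r: "\<And>c. c \<in> K' \<Longrightarrow> r c \<in> mball c (e/2) \<inter> S" using r0 by blast
  show "\<exists>K. finite K \<and> K \<subseteq> S \<and> S \<subseteq> (\<Union>x\<in>K. mball x e)"
  proof (intro exI conjI)
    show "finite (r ` K')" using K(1) unfolding K'_def by auto
    show "r ` K' \<subseteq> S" using r by auto
    show "S \<subseteq> (\<Union>x\<in>r ` K'. mball x e)"
    proof
      fix s assume s: "s \<in> S"
      then obtain c where c: "c \<in> K" "s \<in> mball c (e/2)" using K(3) by auto
      then have cK': "c \<in> K'" unfolding K'_def using s by auto
      have rc: "r c \<in> M" "c \<in> M" "d c (r c) < e/2" using r[OF cK'] by (auto simp: in_mball)
      have sc: "s \<in> M" "d c s < e/2" using c(2) by (auto simp: in_mball)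
      have "d (r c) s \<le> d (r c) c + d c s"
        using rc sc by (intro triangle) auto
      also have "\<dots> = d c (r c) + d c s" by (simp add: commute[of "r c" c])
      also have "\<dots> < e" using rc sc by simp
      finally have "s \<in> mball (r c) e" using rc sc by (simp add: in_mball)
      then show "s \<in> (\<Union>x\<in>r ` K'. mball x e)"
        using cK' by blast
    qed
  qed
qed
end

locale souslin = Metric_space M d for M :: "'p set" and d +
  fixes g :: "'p \<Rightarrow> 'a::metric_space \<times> 'b::metric_space" and x :: "nat \<Rightarrow> 'p"
  assumes compl: "mcomplete"
    and gcont: "continuous_map mtopology euclidean g"
    and xM: "\<And>i. x i \<in> M"
    and xdense: "mtopology closure_of (range x) = M"
begin

definition L :: "nat \<Rightarrow> nat \<Rightarrow> 'p set" where
  "L j n = {t\<in>M. \<exists>i\<le>n. d t (x i) \<le> 1 / real (Suc j)}"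

definition D :: "(nat \<Rightarrow> nat) \<Rightarrow> nat \<Rightarrow> 'p set" where
  "D s k = {t\<in>M. \<forall>j<k. t \<in> L j (s j)}"

definition KK :: "(nat \<Rightarrow> nat) \<Rightarrow> nat \<Rightarrow> ('a \<times> 'b) set" where
  "KK s k = closure (g ` D s k)"

lemma D_dec: "k \<le> k' \<Longrightarrow> D s k' \<subseteq> D s k"
  unfolding D_def by auto

lemma KK_dec: "k \<le> k' \<Longrightarrow> KK s k' \<subseteq> KK s k"
  unfolding KK_def by (intro closure_mono image_mono D_dec)

lemma KK_closed: "closed (KK s k)"
  unfolding KK_def by simp

lemma subclaim:
  assumes z: "\<And>k. z \<in> KK s k"
  shows "z \<in> g ` M"
proof -
  have "\<forall>k. \<exists>t. t \<in> D s k \<and> dist (g t) z < 1 / real (Suc k)"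
  proof
    fix k
    have "z \<in> closure (g ` D s k)" using z unfolding KK_def by simp
    then obtain y where "y \<in> g ` D s k" "dist y z < 1 / real (Suc k)"
      using closure_approachable[of z "g ` D s k"] by (metis dist_commute of_nat_0_less_iff zero_less_Suc zero_less_divide_1_iff)
    then show "\<exists>t. t \<in> D s k \<and> dist (g t) z < 1 / real (Suc k)" by auto
  qed
  then obtain t where t: "\<And>k. t k \<in> D s k" "\<And>k. dist (g (t k)) z < 1 / real (Suc k)"
    by metis
  have tM: "t k \<in> M" for k using t(1)[of k] unfolding D_def by auto
  have tb: "mtotally_bounded (range t)"
  proof (rule mtotally_bounded_centres)
    show "range t \<subseteq> M" using tM by auto
    fix e :: real assume e: "e > 0"
    then obtain j where j: "1 / real (Suc j) < e" using nat_approx_posE by blast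
    show "\<exists>K. finite K \<and> K \<subseteq> M \<and> range t \<subseteq> (\<Union>c\<in>K. mball c e)"
    proof (intro exI conjI)
      show "finite (x ` {..s j} \<union> t ` {..j})" by auto
      show "x ` {..s j} \<union> t ` {..j} \<subseteq> M" using xM tM by auto
      show "range t \<subseteq> (\<Union>c\<in>x ` {..s j} \<union> t ` {..j}. mball c e)"
      proof clarify
        fix k
        show "t k \<in> (\<Union>c\<in>x ` {..s j} \<union> t ` {..j}. mball c e)"
        proof (cases "k \<le> j")
          case True then show ?thesis using tM[of k] e by auto
        next
          case False
          then have "t k \<in> L j (s j)" using t(1)[of k] unfolding D_def by auto
          then obtain i where i: "i \<le> s j" "d (t k) (x i) \<le> 1 / real (Suc j)"
            unfolding L_def by auto
          then have "t k \<in> mball (x i) e" using j xM tM by (auto simp: commute)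
          then show ?thesis using i by auto
        qed
      qed
    qed
  qed
  then obtain r where r: "strict_mono r" "MCauchy (t \<circ> r)"
    using mtotally_bounded_sequentially by blast
  then obtain l where l: "limitin mtopology (t \<circ> r) l sequentially"
    using compl unfolding mcomplete_def by blast
  then have lM: "l \<in> M" using limitin_topspace by fastforce
  have "limitin euclidean (g \<circ> (t \<circ> r)) (g l) sequentially"
    by (rule continuous_map_limit[OF gcont l])
  then have lim1: "(\<lambda>n. g (t (r n))) \<longlonglongrightarrow> g l" by (simp add: o_def)
  have lim2: "(\<lambda>n. g (t (r n))) \<longlonglongrightarrow> z"
  proof (rule tendstoI)
    fix e :: real assume e: "e > 0"
    then obtain N where N: "1 / real (Suc N) < e" using nat_approx_posE by blast
    show "\<forall>\<^sub>F n in sequentially. dist (g (t (r n))) z < e"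
    proof (rule eventually_sequentiallyI[of N])
      fix n assume "N \<le> n"
      then have "N \<le> r n" using seq_suble[OF r(1), of n] by simp
      then have "1 / real (Suc (r n)) \<le> 1 / real (Suc N)"
        by (intro divide_left_mono) auto
      then show "dist (g (t (r n))) z < e" using t(2)[of "r n"] N by simp
    qed
  qed
  have "g l = z" using LIMSEQ_unique[OF lim1 lim2] .
  then show ?thesis using lM by auto
qed

end


lemma closed_sec:
  fixes Z :: "('a::metric_space \<times> 'b::metric_space) set"
  shows "closed Z \<Longrightarrow> closed (sec Z w)"
proof -
  assume "closed Z"
  moreover have "sec Z w = (\<lambda>y. (w, y)) -` Z" unfolding sec_def by auto
  moreover have "closed ((\<lambda>y. (w, y)) -` Z)" if "closed Z"
  proof -
    have "\<And>x. continuous (at x) (\<lambda>y::'b. (w, y))" by (intro continuous_intros)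
    from continuous_closed_vimage[OF that this] show ?thesis .
  qed
  ultimately show ?thesis by simp
qed

primrec pre :: "(nat list \<Rightarrow> nat) \<Rightarrow> nat \<Rightarrow> nat list" where
  "pre F 0 = []"
| "pre F (Suc k) = pre F k @ [F (pre F k)]"

lemma pre_len: "length (pre F k) = k"
  by (induction k) auto

lemma pre_nth: "j < k \<Longrightarrow> pre F k ! j = F (pre F j)"
proof (induction k)
  case 0 then show ?case by simp
next
  case (Suc k)
  then show ?case
    by (cases "j = k") (auto simp: nth_append pre_len)
qed

context souslin
begin

lemma L_mono:
  assumes nn: "n \<le> n'" shows "L j n \<subseteq> L j n'"
proof
  fix t assume "t \<in> L j n"
  then obtain i where i: "t \<in> M" "i \<le> n" "d t (x i) \<le> 1 / real (Suc j)" unfolding L_def by blast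
  then have "i \<le> n'" using nn by linarith
  then show "t \<in> L j n'" using i unfolding L_def by blast
qed

lemma L_cover: "t \<in> M \<Longrightarrow> \<exists>n. t \<in> L j n"
proof -
  assume t: "t \<in> M"
  then have "t \<in> mtopology closure_of (range x)" using xdense by simp
  then have "\<forall>r>0. \<exists>y\<in>range x. y \<in> mball t r" unfolding metric_closure_of by blast
  then obtain y where "y \<in> range x" "y \<in> mball t (1 / real (Suc j))"
    by (meson of_nat_0_less_iff zero_less_Suc zero_less_divide_1_iff)
  then obtain i where "d t (x i) < 1 / real (Suc j)" by (auto simp: in_mball)
  then show ?thesis using t unfolding L_def by (intro exI[of _ i]) auto
qed

definition Dl :: "nat list \<Rightarrow> 'p set" where
  "Dl ns = {t\<in>M. \<forall>j<length ns. t \<in> L j (ns ! j)}"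

lemma Dl_pre: "Dl (pre F k) = D (\<lambda>j. F (pre F j)) k"
  unfolding Dl_def D_def by (auto simp: pre_len pre_nth)

lemma Dl_snoc_Un: "(\<Union>n. Dl (ns @ [n])) = Dl ns"
proof
  show "(\<Union>n. Dl (ns @ [n])) \<subseteq> Dl ns"
    unfolding Dl_def by (auto simp: nth_append)
  show "Dl ns \<subseteq> (\<Union>n. Dl (ns @ [n]))"
  proof
    fix t assume t: "t \<in> Dl ns"
    then have tM: "t \<in> M" unfolding Dl_def by auto
    obtain n where n: "t \<in> L (length ns) n" using L_cover[OF tM] by blast
    have "t \<in> Dl (ns @ [n])"
      using t n unfolding Dl_def by (auto simp: nth_append less_Suc_eq)
    then show "t \<in> (\<Union>n. Dl (ns @ [n]))" by blast
  qed
qed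

lemma Dl_snoc_mono: "n \<le> n' \<Longrightarrow> Dl (ns @ [n]) \<subseteq> Dl (ns @ [n'])"
  unfolding Dl_def using L_mono by (force simp: nth_append less_Suc_eq)

context
  fixes P :: "'b measure" and w :: 'a
  assumes psP: "prob_space P" and sP: "sets P = sets borel"
begin

lemma spP: "space P = UNIV"
  using sets_eq_imp_space_eq[OF sP] by simp

lemma sec_closed_sets: "closed Z \<Longrightarrow> sec Z w \<in> sets P"
  using sP closed_sec[of Z w] by simp

lemma claim1:
  assumes c: "\<And>k. c \<le> measure P (sec (KK s k) w)"
  shows "\<exists>B\<in>sets P. B \<subseteq> sec (g ` M) w \<and> c \<le> measure P B"
proof -
  interpret prob_space P by (rule psP)
  define B where "B = (\<Inter>k. sec (KK s k) w)"
  have rs: "range (\<lambda>k. sec (KK s k) w) \<subseteq> sets P"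
    using sec_closed_sets KK_closed by auto
  have dec: "decseq (\<lambda>k. sec (KK s k) w)"
    unfolding decseq_def sec_def using KK_dec by blast
  have lim: "(\<lambda>k. measure P (sec (KK s k) w)) \<longlonglongrightarrow> measure P B"
    unfolding B_def by (rule finite_Lim_measure_decseq[OF rs dec])
  have "c \<le> measure P B" using lim c by (intro LIMSEQ_le_const) auto
  moreover have "B \<in> sets P" unfolding B_def using rs by auto
  moreover have "B \<subseteq> sec (g ` M) w"
    unfolding B_def sec_def by (auto intro: subclaim)
  ultimately show ?thesis by blast
qed

lemma claim2_step:
  assumes c: "c < om P (sec (g ` Dl ns) w)"
  shows "\<exists>n. c < om P (sec (g ` Dl (ns @ [n])) w)"
proof -
  interpret prob_space P by (rule psP)
  have inc: "incseq (\<lambda>n. sec (g ` Dl (ns @ [n])) w)"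
    unfolding incseq_def sec_def using Dl_snoc_mono by blast
  have un: "(\<Union>n. sec (g ` Dl (ns @ [n])) w) = sec (g ` Dl ns) w"
    using Dl_snoc_Un unfolding sec_def by blast
  have sp: "\<And>n. sec (g ` Dl (ns @ [n])) w \<subseteq> space P" using spP by simp
  have "c < om P (\<Union>n. sec (g ` Dl (ns @ [n])) w)" using c un by simp
  from om_incseq[OF inc sp this] show ?thesis .
qed

lemma claim2:
  assumes c: "c < om P (sec (g ` M) w)"
  shows "\<exists>s. \<forall>k. c < om P (sec (g ` D s k) w)"
proof -
  define F where "F ns = (SOME n. c < om P (sec (g ` Dl (ns @ [n])) w))" for ns
  have ind: "c < om P (sec (g ` Dl (pre F k)) w)" for k
  proof (induction k)
    case 0
    have "Dl [] = M" unfolding Dl_def by simp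
    then show ?case using c by simp
  next
    case (Suc k)
    have "F (pre F k) = (SOME n. c < om P (sec (g ` Dl (pre F k @ [n])) w))" by (rule F_def)
    then show ?case
      using someI_ex[OF claim2_step[OF Suc.IH]] by simp
  qed
  define s where "s = (\<lambda>j. F (pre F j))"
  have "c < om P (sec (g ` D s k) w)" for k
    using ind[of k] Dl_pre[of F k] by (simp add: s_def)
  then show ?thesis by blast
qed

lemma claim2':
  assumes c: "c < om P (sec (g ` M) w)"
  shows "\<exists>s. \<forall>k. c < measure P (sec (KK s k) w)"
proof -
  interpret prob_space P by (rule psP)
  from claim2[OF c] obtain s where s: "\<And>k. c < om P (sec (g ` D s k) w)" by blast
  have omle: "om P (sec (g ` D s k) w) \<le> measure P (sec (KK s k) w)" for k
  proof (rule om_le)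
    show "sec (KK s k) w \<in> sets P" by (rule sec_closed_sets[OF KK_closed])
    show "sec (g ` D s k) w \<subseteq> sec (KK s k) w"
      using closure_subset[of "g ` D s k"] unfolding sec_def KK_def by auto
  qed
  have "c < measure P (sec (KK s k) w)" for k using s[of k] omle[of k] by linarith
  then show ?thesis by blast
qed

lemma UM: "sec (g ` M) w \<in> sets (completion P)"
proof -
  interpret prob_space P by (rule psP)
  define E where "E = sec (g ` M) w"
  have "\<forall>n. \<exists>B. B \<in> sets P \<and> B \<subseteq> E \<and> om P E - 1 / real (Suc n) \<le> measure P B"
  proof
    fix n
    have "om P E - 1 / real (Suc n) < om P (sec (g ` M) w)" unfolding E_def by simp
    from claim2'[OF this] obtain s where s: "\<And>k. om P E - 1 / real (Suc n) < measure P (sec (KK s k) w)"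
      by blast
    have "\<And>k. om P E - 1 / real (Suc n) \<le> measure P (sec (KK s k) w)"
      using s by (simp add: less_imp_le)
    from claim1[OF this] show "\<exists>B. B \<in> sets P \<and> B \<subseteq> E \<and> om P E - 1 / real (Suc n) \<le> measure P B"
      unfolding E_def by blast
  qed
  from choice[OF this] obtain B where B0: "\<forall>n. B n \<in> sets P \<and> B n \<subseteq> E \<and> om P E - 1 / real (Suc n) \<le> measure P (B n)"
    by blast
  have B: "\<And>n. B n \<in> sets P" "\<And>n. B n \<subseteq> E" "\<And>n. om P E - 1 / real (Suc n) \<le> measure P (B n)"
    using B0 by auto
  define U where "U = (\<Union>n. B n)"
  have U: "U \<in> sets P" "U \<subseteq> E" unfolding U_def using B by auto
  have lb: "om P E - 1 / real (Suc n) \<le> measure P U" for n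
  proof -
    have "measure P (B n) \<le> measure P U"
      using B(1) U(1) by (intro finite_measure_mono) (auto simp: U_def)
    then show ?thesis using B(3)[of n] by linarith
  qed
  have mU: "om P E \<le> measure P U"
  proof (rule field_le_epsilon)
    fix e :: real assume "0 < e"
    then obtain n where "1 / real (Suc n) < e" using nat_approx_posE by blast
    then show "om P E \<le> measure P U + e" using lb[of n] by linarith
  qed
  obtain H where H: "H \<in> sets P" "E \<subseteq> H" "measure P H = om P E" using om_hull[of E] spP by auto
  have "measure P (H - U) = measure P H - measure P U"
    using U H by (intro finite_measure_Diff) auto
  then have "measure P (H - U) = 0" using mU H measure_nonneg[of P "H - U"] by linarith
  then have nul: "H - U \<in> null_sets P" using H U by (auto simp: null_sets_def emeasure_eq_measure)
  have eqE: "E = U \<union> (E - U)" using U by auto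
  have sub: "E - U \<subseteq> H - U" using H by auto
  show ?thesis unfolding E_def[symmetric]
    by (rule sets_completionI[OF eqE sub nul U(1)])
qed

lemma char:
  "0 < measure (completion P) (sec (g ` M) w) \<longleftrightarrow>
   (\<exists>m s. \<forall>k. 1 / real (Suc m) \<le> measure P (sec (KK s k) w))"
proof
  interpret prob_space P by (rule psP)
  assume pos: "0 < measure (completion P) (sec (g ` M) w)"
  have "measure (completion P) (sec (g ` M) w) \<le> om P (sec (g ` M) w)"
    by (rule om_completion[OF UM])
  with pos have vpos: "0 < om P (sec (g ` M) w) / 2" by simp
  obtain m where "1 / real (Suc m) < om P (sec (g ` M) w) / 2"
    using nat_approx_posE[OF vpos] by blast
  then have m: "2 / real (Suc m) < om P (sec (g ` M) w)" by simp
  then obtain s where "\<And>k. 2 / real (Suc m) < measure P (sec (KK s k) w)"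
    using claim2' by blast
  then have "\<And>k. 1 / real (Suc m) \<le> measure P (sec (KK s k) w)"
    by (smt (verit) divide_right_mono of_nat_0_le_iff)
  then show "\<exists>m s. \<forall>k. 1 / real (Suc m) \<le> measure P (sec (KK s k) w)" by blast
next
  interpret prob_space P by (rule psP)
  interpret C: prob_space "completion P" by (rule prob_space_completion)
  assume "\<exists>m s. \<forall>k. 1 / real (Suc m) \<le> measure P (sec (KK s k) w)"
  then obtain m s where "\<And>k. 1 / real (Suc m) \<le> measure P (sec (KK s k) w)" by blast
  then obtain B where B: "B \<in> sets P" "B \<subseteq> sec (g ` M) w" "1 / real (Suc m) \<le> measure P B"
    using claim1 by blast
  have m1: "measure (completion P) B \<le> measure (completion P) (sec (g ` M) w)"
    using B UM by (intro C.finite_measure_mono) auto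
  have m2: "measure (completion P) B = measure P B" using B(1) by simp
  have pos1: "0 < 1 / real (Suc m)" by simp
  show "0 < measure (completion P) (sec (g ` M) w)" using B(3) m1 m2 pos1 by linarith
qed

end

end


lemma topspace_weak: "topspace weak_topology = prob_measures"
  unfolding weak_topology_def by auto

lemma openin_weak:
  fixes f :: "'b::topological_space \<Rightarrow> real"
  assumes "continuous_on UNIV f" "bounded (range f)" "open U"
  shows "openin weak_topology {P \<in> prob_measures. integral\<^sup>L P f \<in> U}"
  unfolding weak_topology_def
  by (rule topology_generated_by_Basis) (use assms in blast)

definition phi :: "('a::metric_space \<times> 'b::metric_space) set \<Rightarrow> nat \<Rightarrow> 'a \<Rightarrow> 'b \<Rightarrow> real" where
  "phi K n w y = max 0 (1 - real (Suc n) * infdist (w, y) K)"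

lemma phi_bounds: "0 \<le> phi K n w y" "phi K n w y \<le> 1"
  unfolding phi_def using infdist_nonneg[of "(w, y)" K] by auto

lemma phi_lip: "phi K n w y \<le> phi K n w0 y + real (Suc n) * dist w w0"
proof -
  have "infdist (w0, y) K \<le> infdist (w, y) K + dist (w0, y) (w, y)" by (rule infdist_triangle)
  moreover have "dist (w0, y) (w, y) = dist w w0" by (simp add: dist_Pair_Pair dist_commute)
  ultimately have "infdist (w0, y) K \<le> infdist (w, y) K + dist w w0" by simp
  then have "real (Suc n) * infdist (w0, y) K \<le> real (Suc n) * infdist (w, y) K + real (Suc n) * dist w w0"
    by (metis distrib_left mult_left_mono of_nat_0_le_iff)
  moreover have "0 \<le> real (Suc n) * dist w w0" by simp
  ultimately show ?thesis unfolding phi_def max_def by (smt (verit))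
qed

lemma phi_cont: "continuous_on UNIV (phi K n w)"
  unfolding phi_def by (intro continuous_intros)

lemma phi_bdd: "bounded (range (phi K n w))"
proof -
  have "\<And>y. \<bar>phi K n w y\<bar> \<le> 1" using phi_bounds(1)[of K n w] phi_bounds(2)[of K n w] by (simp add: abs_le_iff)
  then have "range (phi K n w) \<subseteq> cball 0 1" by (auto simp: dist_real_def)
  then show ?thesis using bounded_cball bounded_subset by blast
qed

lemma phi_ge_ind: "indicator (sec K w) y \<le> phi K n w y"
  using phi_bounds[of K n w y] unfolding phi_def sec_def by (auto simp: indicator_def)

lemma phi_lim:
  assumes K: "closed K" "K \<noteq> {}"
  shows "(\<lambda>n. phi K n w y) \<longlonglongrightarrow> indicator (sec K w) y"
proof (cases "(w, y) \<in> K")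
  case True
  then have "\<And>n. phi K n w y = 1" unfolding phi_def by simp
  then show ?thesis using True by (simp add: sec_def)
next
  case False
  then have pos: "infdist (w, y) K > 0" using infdist_pos_not_in_closed[OF K] by blast
  obtain N where N: "1 / real (Suc N) < infdist (w, y) K" using nat_approx_posE[OF pos] by blast
  have "phi K n w y = 0" if "N \<le> n" for n
  proof -
    have "1 < real (Suc N) * infdist (w, y) K" using N by (simp add: field_simps)
    moreover have "real (Suc N) * infdist (w, y) K \<le> real (Suc n) * infdist (w, y) K"
      using that pos by (intro mult_right_mono) auto
    ultimately have "1 < real (Suc n) * infdist (w, y) K" by linarith
    then show ?thesis unfolding phi_def by simp
  qed
  then have "eventually (\<lambda>n. phi K n w y = 0) sequentially" by (rule eventually_sequentiallyI)
  then have "(\<lambda>n. phi K n w y) \<longlonglongrightarrow> 0" by (rule tendsto_eventually)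
  then show ?thesis using False by (simp add: sec_def)
qed

context
  fixes P :: "'b::metric_space measure"
  assumes pP: "P \<in> prob_measures"
begin

lemma pP_prob: "prob_space P" and pP_sets: "sets P = sets borel"
  using pP unfolding prob_measures_def by auto

lemma meas_cont: "continuous_on UNIV f \<Longrightarrow> f \<in> borel_measurable P"
  using borel_measurable_continuous_onI[of f] measurable_cong_sets[OF pP_sets refl] by blast

lemma phi_integrable: "integrable P (phi K n w)"
proof -
  interpret prob_space P by (rule pP_prob)
  show ?thesis
    by (rule integrable_const_bound[of _ 1]) (auto simp: phi_bounds meas_cont[OF phi_cont] abs_le_iff intro!: always_eventually)
qed

lemma phi_int_lim:
  assumes K: "closed K" "K \<noteq> {}"
  shows "(\<lambda>n. integral\<^sup>L P (phi K n w)) \<longlonglongrightarrow> measure P (sec K w)"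
proof -
  interpret prob_space P by (rule pP_prob)
  have secs: "sec K w \<in> sets P" using closed_sec[OF K(1), of w] pP_sets by simp
  have "(\<lambda>n. integral\<^sup>L P (phi K n w)) \<longlonglongrightarrow> integral\<^sup>L P (indicator (sec K w))"
  proof (rule integral_dominated_convergence[where w = "\<lambda>_. 1"])
    show "indicator (sec K w) \<in> borel_measurable P" using secs by simp
    show "\<And>n. phi K n w \<in> borel_measurable P" by (rule meas_cont[OF phi_cont])
    show "integrable P (\<lambda>_. 1::real)" by simp
    show "AE y in P. (\<lambda>n. phi K n w y) \<longlonglongrightarrow> indicator (sec K w) y"
      using phi_lim[OF K] by simp
    fix n
    have "\<And>y. norm (phi K n w y) \<le> 1" using phi_bounds(1)[of K n w] phi_bounds(2)[of K n w] by simp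
    then show "AE y in P. norm (phi K n w y) \<le> 1" by simp
  qed
  moreover have "integral\<^sup>L P (indicator (sec K w)) = measure P (sec K w)"
    using secs sets.sets_into_space by (simp add: Int_absorb2)
  ultimately show ?thesis by simp
qed

lemma phi_int_ge:
  assumes K: "closed K"
  shows "measure P (sec K w) \<le> integral\<^sup>L P (phi K n w)"
proof -
  interpret prob_space P by (rule pP_prob)
  have secs: "sec K w \<in> sets P" using closed_sec[OF K, of w] pP_sets by simp
  have ii: "integrable P (indicator (sec K w) :: 'b \<Rightarrow> real)"
    using secs by (intro integrable_real_indicator) (simp_all add: emeasure_eq_measure)
  have "integral\<^sup>L P (indicator (sec K w) :: 'b \<Rightarrow> real) \<le> integral\<^sup>L P (phi K n w)"
    by (intro integral_mono phi_integrable ii) (auto simp: phi_ge_ind)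
  moreover have "integral\<^sup>L P (indicator (sec K w)) = measure P (sec K w)"
    using secs sets.sets_into_space by (simp add: Int_absorb2)
  ultimately show ?thesis by simp
qed

lemma phi_int_lip:
  "integral\<^sup>L P (phi K n w) \<le> integral\<^sup>L P (phi K n w0) + real (Suc n) * dist w w0"
proof -
  interpret prob_space P by (rule pP_prob)
  have "integral\<^sup>L P (phi K n w) \<le> integral\<^sup>L P (\<lambda>y. phi K n w0 y + real (Suc n) * dist w w0)"
    by (intro integral_mono phi_integrable Bochner_Integration.integrable_add integrable_const phi_lip)
  also have "\<dots> = integral\<^sup>L P (phi K n w0) + real (Suc n) * dist w w0"
    by (subst Bochner_Integration.integral_add) (auto intro: phi_integrable simp: prob_space)
  finally show ?thesis .
qed

end

lemma open_phi_less:
  fixes K :: "('a::metric_space \<times> 'b::metric_space) set"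
  shows "openin (prod_topology euclidean weak_topology)
           {(w, P). P \<in> prob_measures \<and> integral\<^sup>L P (phi K n w) < c}"
  unfolding openin_prod_topology_alt
proof (intro allI impI)
  fix w0 P0 assume "(w0, P0) \<in> {(w, P). P \<in> prob_measures \<and> integral\<^sup>L P (phi K n w) < c}"
  then have P0: "P0 \<in> prob_measures" and lt: "integral\<^sup>L P0 (phi K n w0) < c" by auto
  define e where "e = c - integral\<^sup>L P0 (phi K n w0)"
  have e: "e > 0" using lt unfolding e_def by simp
  define U where "U = ball w0 (e / (2 * real (Suc n)))"
  define V where "V = {P \<in> prob_measures. integral\<^sup>L P (phi K n w0) \<in> {..< integral\<^sup>L P0 (phi K n w0) + e / 2}}"
  show "\<exists>U V. openin euclidean U \<and> openin weak_topology V \<and> w0 \<in> U \<and> P0 \<in> V \<and>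
             U \<times> V \<subseteq> {(w, P). P \<in> prob_measures \<and> integral\<^sup>L P (phi K n w) < c}"
  proof (intro exI conjI)
    show "openin euclidean U" unfolding U_def by simp
    show "openin weak_topology V" unfolding V_def
      by (rule openin_weak[OF phi_cont phi_bdd]) simp
    show "w0 \<in> U" unfolding U_def using e by simp
    show "P0 \<in> V" unfolding V_def using P0 e by simp
    show "U \<times> V \<subseteq> {(w, P). P \<in> prob_measures \<and> integral\<^sup>L P (phi K n w) < c}"
    proof clarify
      fix w P assume wU: "w \<in> U" and PV: "P \<in> V"
      then have P: "P \<in> prob_measures" and iP: "integral\<^sup>L P (phi K n w0) < integral\<^sup>L P0 (phi K n w0) + e / 2"
        unfolding V_def by auto
      have "dist w0 w < e / (2 * real (Suc n))" using wU unfolding U_def by simp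
      then have "real (Suc n) * dist w w0 < real (Suc n) * (e / (2 * real (Suc n)))"
        by (intro mult_strict_left_mono) (simp_all add: dist_commute)
      also have "\<dots> = e / 2" by (simp add: field_simps)
      finally have d: "real (Suc n) * dist w w0 < e / 2" .
      have "integral\<^sup>L P (phi K n w) \<le> integral\<^sup>L P (phi K n w0) + real (Suc n) * dist w w0"
        by (rule phi_int_lip[OF P])
      also have "\<dots> < (integral\<^sup>L P0 (phi K n w0) + e / 2) + e / 2"
        by (rule add_strict_mono[OF iP d])
      also have "\<dots> = c" unfolding e_def by simp
      finally have "integral\<^sup>L P (phi K n w) < c" .
      then show "P \<in> prob_measures \<and> integral\<^sup>L P (phi K n w) < c" using P by simp
    qed
  qed
qed

lemma closed_meas_ge:
  fixes K :: "('a::metric_space \<times> 'b::metric_space) set"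
  assumes K: "closed K"
  shows "closedin (prod_topology euclidean weak_topology)
           {(w, P). P \<in> prob_measures \<and> c \<le> measure P (sec K w)}"
proof (cases "K = {}")
  case True
  have "sec K w = {}" for w using True unfolding sec_def by simp
  then have eq: "{(w, P). P \<in> prob_measures \<and> c \<le> measure P (sec K w)} =
      (if c \<le> 0 then topspace (prod_topology euclidean weak_topology) else {})"
    by (auto simp: topspace_weak)
  show ?thesis
  proof (cases "c \<le> 0")
    case True then show ?thesis unfolding eq by (simp only: if_True closedin_topspace)
  next
    case False then show ?thesis unfolding eq by (simp only: if_False closedin_empty)
  qed
next
  case False
  define S where "S = (\<Union>n. {(w, P). P \<in> prob_measures \<and> integral\<^sup>L P (phi K n w) < c})"
  have oS: "openin (prod_topology euclidean weak_topology) S"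
    unfolding S_def by (intro openin_Union) (auto intro: open_phi_less)
  have eq: "{(w, P). P \<in> prob_measures \<and> c \<le> measure P (sec K w)} =
      topspace (prod_topology euclidean weak_topology) - S"
  proof (intro set_eqI iffI)
    fix z assume z: "z \<in> {(w, P). P \<in> prob_measures \<and> c \<le> measure P (sec K w)}"
    obtain w P where wP: "z = (w, P)" by (cases z)
    have P: "P \<in> prob_measures" and c: "c \<le> measure P (sec K w)" using z wP by auto
    have "c \<le> integral\<^sup>L P (phi K n w)" for n using phi_int_ge[OF P K, of w n] c by linarith
    then show "z \<in> topspace (prod_topology euclidean weak_topology) - S"
      using P wP unfolding S_def by (auto simp: topspace_weak not_less)
  next
    fix z assume z: "z \<in> topspace (prod_topology euclidean weak_topology) - S"
    obtain w P where wP: "z = (w, P)" by (cases z)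
    have P: "P \<in> prob_measures" using z wP by (simp add: topspace_weak)
    have ge: "c \<le> integral\<^sup>L P (phi K n w)" for n using z wP P unfolding S_def by (auto simp: not_less)
    have "c \<le> measure P (sec K w)"
      using phi_int_lim[OF P K False, of w] ge by (intro LIMSEQ_le_const) auto
    then show "z \<in> {(w, P). P \<in> prob_measures \<and> c \<le> measure P (sec K w)}" using P wP by simp
  qed
  show ?thesis unfolding eq using oS by (rule closedin_diff[OF closedin_topspace])
qed


lemma metrizable_separable_second_countable:
  assumes X: "completely_metrizable_space X" and S: "separable_space X"
  shows "second_countable X"
proof -
  obtain M d where Md: "Metric_space M d" "X = Metric_space.mtopology M d"
    using X unfolding completely_metrizable_space_def by blast
  interpret Metric_space M d by (rule Md(1))
  obtain C where C: "countable C" "C \<subseteq> M" "mtopology closure_of C = M"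
    using S Md(2) unfolding separable_space_def by auto
  define B where "B = (\<lambda>(c, n). mball c (1 / real (Suc n))) ` (C \<times> UNIV)"
  have "countable B" unfolding B_def using C(1) by auto
  moreover have "\<forall>V\<in>B. openin X V" unfolding B_def Md(2) by auto
  moreover have "\<forall>U x. openin X U \<and> x \<in> U \<longrightarrow> (\<exists>V\<in>B. x \<in> V \<and> V \<subseteq> U)"
  proof (intro allI impI)
    fix U x assume Ux: "openin X U \<and> x \<in> U"
    then have xM: "x \<in> M" and "\<exists>r>0. mball x r \<subseteq> U"
      using Md(2) openin_mtopology by auto
    then obtain r where r: "r > 0" "mball x r \<subseteq> U" by blast
    obtain n where n: "1 / real (Suc n) < r / 2" using nat_approx_posE[of "r/2"] r by auto
    have "x \<in> mtopology closure_of C" using C(3) xM by simp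
    then have "\<forall>s>0. \<exists>y\<in>C. y \<in> mball x s" unfolding metric_closure_of by blast
    then obtain c where c: "c \<in> C" "c \<in> mball x (1 / real (Suc n))"
      by (meson of_nat_0_less_iff zero_less_Suc zero_less_divide_1_iff)
    have cM: "c \<in> M" and dxc: "d x c < 1 / real (Suc n)" using c by auto
    have "mball c (1 / real (Suc n)) \<subseteq> mball x r"
    proof
      fix y assume "y \<in> mball c (1 / real (Suc n))"
      then have yM: "y \<in> M" and dcy: "d c y < 1 / real (Suc n)" by auto
      have "d x y \<le> d x c + d c y" using xM cM yM by (rule triangle)
      then have "d x y < r" using dxc dcy n by linarith
      then show "y \<in> mball x r" using xM yM by simp
    qed
    moreover have "x \<in> mball c (1 / real (Suc n))" using xM cM dxc by (simp add: commute)
    moreover have "mball c (1 / real (Suc n)) \<in> B" unfolding B_def using c(1) by force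
    ultimately show "\<exists>V\<in>B. x \<in> V \<and> V \<subseteq> U" using r(2) by blast
  qed
  ultimately show ?thesis unfolding second_countable_def by blast
qed

lemma separable_euclidean: "separable_space (euclidean :: 'a::second_countable_topology topology)"
proof -
  obtain D :: "'a set" where D: "countable D" "\<And>X. open X \<Longrightarrow> X \<noteq> {} \<Longrightarrow> \<exists>d\<in>D. d \<in> X"
    using countable_dense_setE by blast
  have "closure D = UNIV"
  proof (rule ccontr)
    assume "closure D \<noteq> UNIV"
    then have "open (- closure D)" "- closure D \<noteq> {}" by auto
    then obtain d where "d \<in> D" "d \<in> - closure D" using D(2) by blast
    then show False using closure_subset by blast
  qed
  then show ?thesis unfolding separable_space_def using D(1) by auto
qed

lemma Polish_closed_prod:
  fixes T :: "'x topology"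
  assumes T: "Polish_space T"
    and Z: "closedin (prod_topology T (euclidean :: 'y::polish_space topology)) Z"
  shows "completely_metrizable_space (subtopology (prod_topology T euclidean) Z)"
    "separable_space (subtopology (prod_topology T (euclidean :: 'y topology)) Z)"
proof -
  have cT: "completely_metrizable_space T" and sT: "separable_space T"
    using T unfolding Polish_space_def by auto
  have cP: "completely_metrizable_space (prod_topology T (euclidean :: 'y topology))"
    using cT completely_metrizable_space_euclidean[where 'a='y] by (simp add: completely_metrizable_space_prod_topology)
  then show "completely_metrizable_space (subtopology (prod_topology T euclidean) Z)"
    using Z by (rule completely_metrizable_space_closedin)
  obtain C1 where C1: "countable C1" "C1 \<subseteq> topspace T" "T closure_of C1 = topspace T"
    using sT unfolding separable_space_def by blast
  obtain C2 :: "'y set" where C2: "countable C2" "euclidean closure_of C2 = UNIV"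
    using separable_euclidean unfolding separable_space_def by auto
  have "separable_space (prod_topology T (euclidean :: 'y topology))"
    unfolding separable_space_def
    by (rule exI[of _ "C1 \<times> C2"]) (use C1 C2 in \<open>auto simp: closure_of_Times\<close>)
  then have "second_countable (prod_topology T (euclidean :: 'y topology))"
    using cP by (intro metrizable_separable_second_countable)
  then have "second_countable (subtopology (prod_topology T (euclidean :: 'y topology)) Z)"
    by (rule second_countable_subtopology)
  then show "separable_space (subtopology (prod_topology T (euclidean :: 'y topology)) Z)"
    by (rule second_countable_imp_separable_space)
qed

definition enc :: "(nat \<Rightarrow> real) \<times> (nat \<Rightarrow> real) \<Rightarrow> (nat \<Rightarrow> real)" where
  "enc p = (\<lambda>n. if even n then fst p (n div 2) else snd p (n div 2))"

definition dec :: "(nat \<Rightarrow> real) \<Rightarrow> (nat \<Rightarrow> real) \<times> (nat \<Rightarrow> real)" where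
  "dec z = (\<lambda>n. z (2 * n), \<lambda>n. z (2 * n + 1))"

lemma dec_enc [simp]: "dec (enc p) = p"
  unfolding dec_def enc_def by (cases p) auto

lemma enc_dec [simp]: "enc (dec z) = z"
proof
  fix n show "enc (dec z) n = z n"
    unfolding dec_def enc_def by (cases "even n") (auto elim: evenE oddE)
qed

lemma analytic_from_closed:
  fixes T :: "(nat \<Rightarrow> real) topology" and E :: "'e topology"
  assumes T: "Polish_space T"
    and Z: "closedin (prod_topology T (euclidean :: (nat \<Rightarrow> real) topology)) Z"
    and h: "continuous_map (prod_topology T euclidean) E h"
  shows "analytic_in E (h ` Z)"
proof -
  define Zt where "Zt = subtopology (prod_topology T (euclidean :: (nat \<Rightarrow> real) topology)) Z"
  have tZt: "topspace Zt = Z" unfolding Zt_def using closedin_subset[OF Z] by auto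
  define T2 where "T2 = pullback_topology (enc ` Z) dec Zt"
  have tT2: "topspace T2 = enc ` Z" unfolding T2_def topspace_pullback_topology tZt by force
  have c1: "continuous_map T2 Zt dec"
    unfolding T2_def using continuous_map_pullback[OF continuous_map_id, of "enc ` Z" dec Zt] by (simp add: o_def)
  have c2: "continuous_map Zt T2 enc"
    unfolding T2_def
  proof (rule continuous_map_pullback')
    show "continuous_map Zt Zt (dec \<circ> enc)" by (simp add: o_def)
    show "topspace Zt \<subseteq> enc -` (enc ` Z)" using tZt by auto
  qed
  have hm: "homeomorphic_maps T2 Zt dec enc"
    unfolding homeomorphic_maps_def using c1 c2 tT2 by auto
  then have hs: "T2 homeomorphic_space Zt" unfolding homeomorphic_space_def by blast
  have "completely_metrizable_space Zt" "separable_space Zt"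
    unfolding Zt_def using Polish_closed_prod[OF T Z] by auto
  then have P2: "Polish_space T2"
    unfolding Polish_space_def using homeomorphic_completely_metrizable_space[OF hs]
      homeomorphic_separable_space[OF hs] by simp
  have hZ: "continuous_map Zt E h" unfolding Zt_def using h by (rule continuous_map_from_subtopology)
  have cont: "continuous_map T2 E (h \<circ> dec)" using continuous_map_compose[OF c1 hZ] .
  have img: "(h \<circ> dec) ` topspace T2 = h ` Z" unfolding tT2 by (force simp: image_image)
  show ?thesis unfolding analytic_in_def using P2 cont img by blast
qed


lemma open_coord: "open B \<Longrightarrow> open ((\<lambda>\<rho>::nat \<Rightarrow> real. \<rho> i) -` B)"
  using continuous_on_open_vimage[of UNIV "\<lambda>\<rho>::nat \<Rightarrow> real. \<rho> i"] by simp

lemma open_near: "open {\<rho>'::nat \<Rightarrow> real. \<forall>i\<le>k. \<bar>\<rho>' i - \<rho> i\<bar> < 1/2}"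
proof -
  have "{\<rho>'::nat \<Rightarrow> real. \<forall>i\<le>k. \<bar>\<rho>' i - \<rho> i\<bar> < 1/2} = (\<Inter>i\<in>{..k}. (\<lambda>\<rho>'. \<rho>' i) -` ball (\<rho> i) (1/2))"
    by (auto simp: dist_real_def abs_minus_commute)
  moreover have "open (\<Inter>i\<in>{..k}. (\<lambda>\<rho>'::nat \<Rightarrow> real. \<rho>' i) -` ball (\<rho> i) (1/2))"
    by (intro open_INT ballI open_coord open_ball) auto
  ultimately show ?thesis by simp
qed

lemma nat_floor_eq:
  fixes a b :: real
  assumes "a \<in> \<nat>" "b \<in> \<nat>" "\<bar>a - b\<bar> < 1/2"
  shows "nat \<lfloor>a\<rfloor> = nat \<lfloor>b\<rfloor>"
proof -
  obtain m where m: "a = real m" using assms(1) Nats_cases by blast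
  obtain n where n: "b = real n" using assms(2) Nats_cases by blast
  have "\<bar>real m - real n\<bar> < 1/2" using assms(3) m n by simp
  then have "m = n" by linarith
  then show ?thesis using m n by simp
qed

lemma closed_prefix:
  fixes \<Phi> :: "nat \<Rightarrow> (nat \<Rightarrow> nat) \<Rightarrow> 'x \<Rightarrow> bool" and X :: "'x topology"
  assumes dep: "\<And>k s s' x. (\<forall>i\<le>k. s i = s' i) \<Longrightarrow> \<Phi> k s x = \<Phi> k s' x"
    and cl: "\<And>k s. closedin X {x \<in> topspace X. \<Phi> k s x}"
  shows "closedin (prod_topology X (euclidean :: (nat \<Rightarrow> real) topology))
     {(x, \<rho>). x \<in> topspace X \<and> (\<forall>i. \<rho> i \<in> \<nat>) \<and> (\<forall>k. \<Phi> k (\<lambda>i. nat \<lfloor>\<rho> i\<rfloor>) x)}"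
    (is "closedin ?T ?Z")
proof -
  have sub: "?Z \<subseteq> topspace ?T" by auto
  have "openin ?T (topspace ?T - ?Z)"
    unfolding openin_prod_topology_alt
  proof (intro allI impI)
    fix x \<rho> assume xr: "(x, \<rho>) \<in> topspace ?T - ?Z"
    then have x: "x \<in> topspace X" by auto
    show "\<exists>U V. openin X U \<and> openin euclidean V \<and> x \<in> U \<and> \<rho> \<in> V \<and> U \<times> V \<subseteq> topspace ?T - ?Z"
    proof (cases "\<forall>i. \<rho> i \<in> \<nat>")
      case False
      then obtain i where i: "\<rho> i \<notin> \<nat>" by blast
      show ?thesis
      proof (intro exI conjI)
        show "openin X (topspace X)" by simp
        show "openin euclidean ((\<lambda>\<rho>'::nat \<Rightarrow> real. \<rho>' i) -` (- \<nat>))"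
          by (simp add: open_coord open_Compl)
        show "x \<in> topspace X" by (rule x)
        show "\<rho> \<in> (\<lambda>\<rho>'::nat \<Rightarrow> real. \<rho>' i) -` (- \<nat>)" using i by simp
        show "topspace X \<times> (\<lambda>\<rho>'::nat \<Rightarrow> real. \<rho>' i) -` (- \<nat>) \<subseteq> topspace ?T - ?Z" by auto
      qed
    next
      case True
      then obtain k where k: "\<not> \<Phi> k (\<lambda>i. nat \<lfloor>\<rho> i\<rfloor>) x" using xr x by auto
      define s where "s = (\<lambda>i. nat \<lfloor>\<rho> i\<rfloor>)"
      define U where "U = topspace X - {x \<in> topspace X. \<Phi> k s x}"
      define V where "V = {\<rho>'::nat \<Rightarrow> real. \<forall>i\<le>k. \<bar>\<rho>' i - \<rho> i\<bar> < 1/2}"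
      show ?thesis
      proof (intro exI conjI)
        show "openin X U" unfolding U_def using cl by (rule openin_diff[OF openin_topspace])
        show "openin euclidean V" unfolding V_def using open_near by simp
        show "x \<in> U" unfolding U_def s_def using x k by simp
        show "\<rho> \<in> V" unfolding V_def by simp
        show "U \<times> V \<subseteq> topspace ?T - ?Z"
        proof
          fix p assume p: "p \<in> U \<times> V"
          obtain x' \<rho>' where p': "p = (x', \<rho>')" by (cases p)
          have x'U: "x' \<in> U" and r'V: "\<rho>' \<in> V" using p p' by auto
          have x'X: "x' \<in> topspace X" using x'U unfolding U_def by auto
          have "(x', \<rho>') \<notin> ?Z"
          proof
            assume "(x', \<rho>') \<in> ?Z"
            then have inZ: "\<forall>i. \<rho>' i \<in> \<nat>" "\<forall>k. \<Phi> k (\<lambda>i. nat \<lfloor>\<rho>' i\<rfloor>) x'" by auto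
            have "\<forall>i\<le>k. nat \<lfloor>\<rho>' i\<rfloor> = s i"
              unfolding s_def using r'V inZ(1) True unfolding V_def by (auto intro!: nat_floor_eq)
            then have "\<Phi> k (\<lambda>i. nat \<lfloor>\<rho>' i\<rfloor>) x' = \<Phi> k s x'" by (rule dep)
            then show False using inZ(2) x'U unfolding U_def by auto
          qed
          then show "p \<in> topspace ?T - ?Z" using p' x'X by simp
        qed
      qed
    qed
  qed
  then show ?thesis using sub by (simp add: closedin_def)
qed


context souslin
begin
lemma D_cong: "(\<And>j. j < k \<Longrightarrow> s j = s' j) \<Longrightarrow> D s k = D s' k"
  unfolding D_def by auto

lemma KK_cong: "(\<And>j. j < k \<Longrightarrow> s j = s' j) \<Longrightarrow> KK s k = KK s' k"
  unfolding KK_def using D_cong by metis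
end

lemma qs_supp_closed: "closed (qs_supp P X w)"
  unfolding qs_supp_def by (rule closed_Inter) auto

lemma qs_null_open:
  fixes \<P> :: "'a \<Rightarrow> 'b::topological_space measure set"
    and X :: "'a \<times> 'b \<Rightarrow> 'c::second_countable_topology"
  assumes pm: "\<P> w \<subseteq> prob_measures" and Ou: "open Ou" and dis: "qs_supp \<P> X w \<inter> Ou = {}"
    and P: "P \<in> \<P> w"
  shows "{y. X (w, y) \<in> Ou} \<in> null_sets (completion P)"
proof -
  define Fs where "Fs = {F. closed F \<and>
      (\<forall>P\<in>\<P> w. measure (completion P) {y. X (w, y) \<in> F} = 1)}"
  have I: "Ou \<inter> \<Inter>Fs = {}" using dis unfolding qs_supp_def Fs_def by auto
  have "\<And>S. S \<in> uminus ` Fs \<Longrightarrow> open S" unfolding Fs_def by auto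
  then obtain G where G: "G \<subseteq> uminus ` Fs" "countable G" "\<Union>G = \<Union>(uminus ` Fs)"
    by (rule Lindelof)
  have OG: "Ou \<subseteq> \<Union>G" using G(3) I by auto
  have sP: "sets P = sets borel" and psP: "prob_space P" using pm P unfolding prob_measures_def by auto
  define M where "M = completion P"
  have psM: "prob_space M" unfolding M_def using psP prob_space.prob_space_completion by blast
  have spM: "space M = UNIV" unfolding M_def using sets_eq_imp_space_eq[OF sP] by simp
  have null: "{y. X (w, y) \<in> S} \<in> null_sets M" if "S \<in> G" for S
  proof -
    from that G(1) obtain F where F: "F \<in> Fs" "S = - F" by auto
    have m1: "measure M {y. X (w, y) \<in> F} = 1" using F P unfolding Fs_def M_def by auto
    hence inM: "{y. X (w, y) \<in> F} \<in> sets M" using measure_notin_sets by fastforce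
    have eq: "{y. X (w, y) \<in> S} = space M - {y. X (w, y) \<in> F}" using F spM by auto
    have "measure M {y. X (w, y) \<in> S} = 0"
      using prob_space.prob_compl[OF psM inM] m1 eq by simp
    moreover have "{y. X (w, y) \<in> S} \<in> sets M" using eq inM by auto
    ultimately show ?thesis
      using finite_measure.emeasure_eq_measure[OF prob_space.axioms(1)[OF psM]]
      by (simp add: null_sets_def)
  qed
  have U: "(\<Union>S\<in>G. {y. X (w, y) \<in> S}) \<in> null_sets M"
    using G(2) null by (intro null_sets_UN') auto
  have "{y. X (w, y) \<in> Ou} \<subseteq> (\<Union>S\<in>G. {y. X (w, y) \<in> S})" using OG by blast
  then show ?thesis using U unfolding M_def by (rule null_sets_completion_subset)
qed

lemma qs_supp_nonempty:
  fixes \<P> :: "'a \<Rightarrow> 'b::topological_space measure set"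
    and X :: "'a \<times> 'b \<Rightarrow> 'c::second_countable_topology"
  assumes ne: "\<P> w \<noteq> {}" and pm: "\<P> w \<subseteq> prob_measures"
  shows "qs_supp \<P> X w \<noteq> {}"
proof
  assume E: "qs_supp \<P> X w = {}"
  obtain P where P: "P \<in> \<P> w" using ne by auto
  have "qs_supp \<P> X w \<inter> UNIV = {}" using E by simp
  from qs_null_open[OF pm open_UNIV this P]
  have "{y. X (w, y) \<in> UNIV} \<in> null_sets (completion P)" .
  moreover have "prob_space (completion P)"
    using pm P prob_space.prob_space_completion unfolding prob_measures_def by blast
  moreover have "space P = UNIV"
    using pm P sets_eq_imp_space_eq[of P borel] unfolding prob_measures_def by auto
  ultimately show False using prob_space.emeasure_space_1 by (fastforce simp: null_sets_def)
qed

lemma qs_char: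
  fixes \<P> :: "'a \<Rightarrow> 'b::topological_space measure set"
    and X :: "'a \<times> 'b \<Rightarrow> 'c::second_countable_topology"
  assumes pm: "\<P> w \<subseteq> prob_measures" and Ou: "open Ou"
    and UM: "\<And>P. P \<in> \<P> w \<Longrightarrow> {y. X (w, y) \<in> Ou} \<in> sets (completion P)"
  shows "qs_supp \<P> X w \<inter> Ou \<noteq> {} \<longleftrightarrow> (\<exists>P\<in>\<P> w. 0 < measure (completion P) {y. X (w, y) \<in> Ou})"
proof
  assume ne: "qs_supp \<P> X w \<inter> Ou \<noteq> {}"
  show "\<exists>P\<in>\<P> w. 0 < measure (completion P) {y. X (w, y) \<in> Ou}"
  proof (rule ccontr)
    assume "\<not> ?thesis"
    then have z: "\<And>P. P \<in> \<P> w \<Longrightarrow> measure (completion P) {y. X (w, y) \<in> Ou} = 0"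
      by (meson linorder_not_le measure_nonneg order_antisym)
    have "- Ou \<in> {F. closed F \<and> (\<forall>P\<in>\<P> w. measure (completion P) {y. X (w, y) \<in> F} = 1)}"
    proof (intro CollectI conjI ballI)
      show "closed (- Ou)" using Ou by auto
      fix P assume P: "P \<in> \<P> w"
      have sP: "sets P = sets borel" and psP: "prob_space P" using pm P unfolding prob_measures_def by auto
      interpret C: prob_space "completion P" using psP prob_space.prob_space_completion by blast
      have sp: "space (completion P) = UNIV" using sets_eq_imp_space_eq[OF sP] by simp
      have "{y. X (w, y) \<in> - Ou} = space (completion P) - {y. X (w, y) \<in> Ou}" using sp by auto
      then show "measure (completion P) {y. X (w, y) \<in> - Ou} = 1"
        using C.prob_compl[OF UM[OF P]] z[OF P] by simp
    qed
    then have "qs_supp \<P> X w \<subseteq> - Ou" unfolding qs_supp_def by blast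
    then show False using ne by blast
  qed
next
  assume "\<exists>P\<in>\<P> w. 0 < measure (completion P) {y. X (w, y) \<in> Ou}"
  then obtain P where P: "P \<in> \<P> w" and pos: "0 < measure (completion P) {y. X (w, y) \<in> Ou}" by blast
  show "qs_supp \<P> X w \<inter> Ou \<noteq> {}"
  proof
    assume "qs_supp \<P> X w \<inter> Ou = {}"
    from qs_null_open[OF pm Ou this P] have "{y. X (w, y) \<in> Ou} \<in> null_sets (completion P)" .
    then have "measure (completion P) {y. X (w, y) \<in> Ou} = 0" by (simp add: measure_def null_sets_def)
    then show False using pos by simp
  qed
qed


lemma analytic_part:
  fixes \<P> :: "'a::polish_space \<Rightarrow> 'b::polish_space measure set"
    and X :: "'a \<times> 'b \<Rightarrow> 'c::euclidean_space"
  assumes P_pm: "\<And>\<omega>. \<P> \<omega> \<subseteq> prob_measures"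
    and graph_analytic:
      "analytic_in (prod_topology euclidean weak_topology) {(\<omega>, P). P \<in> \<P> \<omega>}"
    and Cop: "open C"
    and XC: "analytic_in euclidean (X -` C)"
  shows "analytic_in euclidean {\<omega>. qs_supp \<P> X \<omega> \<inter> C \<noteq> {}}"
proof -
  obtain T' :: "(nat \<Rightarrow> real) topology" and f where
    T': "Polish_space T'" and f: "continuous_map T' (prod_topology euclidean weak_topology) f"
    and fim: "f ` topspace T' = {(\<omega>, P). P \<in> \<P> \<omega>}"
    using graph_analytic unfolding analytic_in_def by blast
  obtain T :: "(nat \<Rightarrow> real) topology" and g where
    T: "Polish_space T" and g: "continuous_map T euclidean g" and gim: "g ` topspace T = X -` C"
    using XC unfolding analytic_in_def by blast
  define h where "h = (\<lambda>p::(nat \<Rightarrow> real) \<times> (nat \<Rightarrow> real). fst (f (fst p)))"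
  have hc: "continuous_map (prod_topology T' euclidean) (euclidean :: 'a topology) h"
  proof -
    have "continuous_map (prod_topology T' (euclidean :: (nat \<Rightarrow> real) topology)) (euclidean :: 'a topology) (fst \<circ> (f \<circ> fst))"
      by (intro continuous_map_compose[OF continuous_map_compose[OF continuous_map_fst f] continuous_map_fst])
    then show ?thesis unfolding h_def by (simp add: o_def)
  qed
  have fP: "snd (f t) \<in> \<P> (fst (f t))" if "t \<in> topspace T'" for t
  proof -
    have "f t \<in> f ` topspace T'" using that by (rule imageI)
    then have "f t \<in> {(\<omega>, P). P \<in> \<P> \<omega>}" by (simp only: fim)
    then show ?thesis by (cases "f t") simp
  qed
  have secX: "sec (X -` C) w = {y. X (w, y) \<in> C}" for w unfolding sec_def by simp
  show ?thesis
  proof (cases "X -` C = {}")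
    case True
    have "{\<omega>. qs_supp \<P> X \<omega> \<inter> C \<noteq> {}} = {}"
    proof -
      have "qs_supp \<P> X w \<inter> C = {}" for w
      proof -
        have e: "{y. X (w, y) \<in> C} = {}" using True by auto
        have "\<And>P. P \<in> \<P> w \<Longrightarrow> {y. X (w, y) \<in> C} \<in> sets (completion P)" unfolding e by simp
        from qs_char[where \<P>=\<P> and w=w and X=X and Ou=C, OF P_pm[of w] Cop this] show ?thesis unfolding e by simp
      qed
      then show ?thesis by blast
    qed
    moreover have "analytic_in euclidean (h ` {})"
      by (rule analytic_from_closed[OF T' closedin_empty hc])
    ultimately show ?thesis by simp
  next
    case False
    obtain M d where Md: "Metric_space M d" "Metric_space.mcomplete M d" "T = Metric_space.mtopology M d"
      using T unfolding Polish_space_def completely_metrizable_space_def by blast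
    interpret Metric_space M d by (rule Md(1))
    have tT: "topspace T = M" using Md(3) by simp
    obtain C0 where C0: "countable C0" "C0 \<subseteq> topspace T" "T closure_of C0 = topspace T"
      using T unfolding Polish_space_def separable_space_def by blast
    have "g ` M \<noteq> {}" using False gim tT by simp
    then have Mne: "M \<noteq> {}" by blast
    have C0ne: "C0 \<noteq> {}"
    proof
      assume "C0 = {}"
      then have "topspace T = {}" using C0(3) by simp
      then show False using Mne tT by simp
    qed
    define x where "x = from_nat_into C0"
    have rx: "range x = C0" unfolding x_def using C0ne C0(1) by simp
    interpret S: souslin M d g x
    proof unfold_locales
      show "mcomplete" by (rule Md(2))
      show "continuous_map mtopology euclidean g" using g Md(3) by simp
      show "\<And>i. x i \<in> M" using rx C0(2) tT by auto
      show "mtopology closure_of range x = M" using rx C0(3) Md(3) tT by simp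
    qed
    have gM: "g ` M = X -` C" using gim tT by simp
    have UM: "{y. X (w, y) \<in> C} \<in> sets (completion P)" if "P \<in> prob_measures" for P w
      using S.UM[of P w] that gM secX unfolding prob_measures_def by auto
    have chr: "0 < measure (completion P) {y. X (w, y) \<in> C} \<longleftrightarrow>
        (\<exists>m s. \<forall>k. 1 / real (Suc m) \<le> measure P (sec (S.KK s k) w))" if "P \<in> prob_measures" for P w
      using S.char[of P w] that gM secX unfolding prob_measures_def by auto
    define \<Phi> where "\<Phi> k s t = (1 / real (Suc (s 0)) \<le> measure (snd (f t)) (sec (S.KK (\<lambda>j. s (Suc j)) k) (fst (f t))))"
      for k and s :: "nat \<Rightarrow> nat" and t
    define Z where "Z = {(t, \<rho>::nat \<Rightarrow> real). t \<in> topspace T' \<and> (\<forall>i. \<rho> i \<in> \<nat>) \<and> (\<forall>k. \<Phi> k (\<lambda>i. nat \<lfloor>\<rho> i\<rfloor>) t)}"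
    have Zc: "closedin (prod_topology T' euclidean) Z"
      unfolding Z_def
    proof (rule closed_prefix)
      fix k and s s' :: "nat \<Rightarrow> nat" and t
      assume "\<forall>i\<le>k. s i = s' i"
      then have "s 0 = s' 0" "S.KK (\<lambda>j. s (Suc j)) k = S.KK (\<lambda>j. s' (Suc j)) k"
        by (auto intro!: S.KK_cong)
      then show "\<Phi> k s t = \<Phi> k s' t" unfolding \<Phi>_def by simp
    next
      fix k and s :: "nat \<Rightarrow> nat"
      define W where "W = {(w, P). P \<in> prob_measures \<and> 1 / real (Suc (s 0)) \<le> measure P (sec (S.KK (\<lambda>j. s (Suc j)) k) w)}"
      have "closedin (prod_topology euclidean weak_topology) W"
        unfolding W_def by (rule closed_meas_ge[OF S.KK_closed])
      then have cW: "closedin T' {t \<in> topspace T'. f t \<in> W}"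
        by (rule closedin_continuous_map_preimage[OF f])
      have "{t \<in> topspace T'. f t \<in> W} = {t \<in> topspace T'. \<Phi> k s t}"
      proof (intro Collect_cong conj_cong refl)
        fix t assume t: "t \<in> topspace T'"
        have "snd (f t) \<in> prob_measures" using fP[OF t] P_pm by blast
        then show "(f t \<in> W) = \<Phi> k s t" unfolding W_def \<Phi>_def by (cases "f t") auto
      qed
      then show "closedin T' {t \<in> topspace T'. \<Phi> k s t}" using cW by simp
    qed
    have "{\<omega>. qs_supp \<P> X \<omega> \<inter> C \<noteq> {}} = h ` Z"
    proof (intro set_eqI iffI)
      fix w assume "w \<in> {\<omega>. qs_supp \<P> X \<omega> \<inter> C \<noteq> {}}"
      then have "qs_supp \<P> X w \<inter> C \<noteq> {}" by simp
      moreover have UMw: "\<And>P. P \<in> \<P> w \<Longrightarrow> {y. X (w, y) \<in> C} \<in> sets (completion P)"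
        using UM P_pm by blast
      ultimately obtain P where P: "P \<in> \<P> w" and pos: "0 < measure (completion P) {y. X (w, y) \<in> C}"
        using qs_char[where \<P>=\<P> and w=w and X=X and Ou=C, OF P_pm[of w] Cop UMw] by blast
      have Ppm: "P \<in> prob_measures" using P P_pm by blast
      obtain m s where ms: "\<And>k. 1 / real (Suc m) \<le> measure P (sec (S.KK s k) w)"
        using chr[OF Ppm] pos by blast
      have "(w, P) \<in> f ` topspace T'" using fim P by simp
      then obtain t where t: "t \<in> topspace T'" "f t = (w, P)" by force
      define \<rho> where "\<rho> = (\<lambda>i. if i = 0 then real m else real (s (i - 1)))"
      have nr: "(\<lambda>i. nat \<lfloor>\<rho> i\<rfloor>) = (\<lambda>i. if i = 0 then m else s (i - 1))"
        unfolding \<rho>_def by (auto simp: fun_eq_iff)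
      have "(t, \<rho>) \<in> Z"
        unfolding Z_def \<Phi>_def using t ms by (auto simp: nr \<rho>_def)
      moreover have "h (t, \<rho>) = w" unfolding h_def using t by simp
      ultimately show "w \<in> h ` Z" by force
    next
      fix w assume "w \<in> h ` Z"
      then obtain t \<rho> where tr: "(t, \<rho>) \<in> Z" "w = fst (f t)" unfolding h_def by force
      have t: "t \<in> topspace T'" and ph: "\<And>k. \<Phi> k (\<lambda>i. nat \<lfloor>\<rho> i\<rfloor>) t" using tr unfolding Z_def by auto
      define P where "P = snd (f t)"
      have P: "P \<in> \<P> w" unfolding P_def tr(2) by (rule fP[OF t])
      have Ppm: "P \<in> prob_measures" using P P_pm by blast
      have "\<exists>m s. \<forall>k. 1 / real (Suc m) \<le> measure P (sec (S.KK s k) w)"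
        using ph unfolding \<Phi>_def P_def tr(2) by blast
      then have "0 < measure (completion P) {y. X (w, y) \<in> C}" using chr[OF Ppm] by blast
      moreover have UMw: "\<And>P. P \<in> \<P> w \<Longrightarrow> {y. X (w, y) \<in> C} \<in> sets (completion P)"
        using UM P_pm by blast
      ultimately have "qs_supp \<P> X w \<inter> C \<noteq> {}"
        using qs_char[where \<P>=\<P> and w=w and X=X and Ou=C, OF P_pm[of w] Cop UMw] P by blast
      then show "w \<in> {\<omega>. qs_supp \<P> X \<omega> \<inter> C \<noteq> {}}" by simp
    qed
    moreover have "analytic_in euclidean (h ` Z)"
      by (rule analytic_from_closed[OF T' Zc hc])
    ultimately show ?thesis by simp
  qed
qed

theorem lemma1:
  fixes \<P> :: "'a::polish_space \<Rightarrow> 'b::polish_space measure set"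
    and \<C> :: "'c::euclidean_space set set"
    and X :: "'a \<times> 'b \<Rightarrow> 'c"
  assumes P_ne: "\<And>\<omega>. \<P> \<omega> \<noteq> {}"
    and P_pm: "\<And>\<omega>. \<P> \<omega> \<subseteq> prob_measures"
    and graph_analytic:
      "analytic_in (prod_topology euclidean weak_topology) {(\<omega>, P). P \<in> \<P> \<omega>}"
    and C_open: "\<And>C. C \<in> \<C> \<Longrightarrow> open C"
    and X_meas: "\<And>C. C \<in> \<C> \<Longrightarrow> analytic_in euclidean (X -` C)"
  shows "(\<forall>\<omega>. qs_supp \<P> X \<omega> \<noteq> {} \<and> closed (qs_supp \<P> X \<omega>)) \<and>
         (\<forall>C\<in>\<C>. analytic_in euclidean {\<omega>. qs_supp \<P> X \<omega> \<inter> C \<noteq> {}})"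
proof (intro conjI allI ballI)
  fix \<omega>
  show "qs_supp \<P> X \<omega> \<noteq> {}" using qs_supp_nonempty[where \<P>=\<P> and w=\<omega> and X=X] P_ne P_pm by blast
  show "closed (qs_supp \<P> X \<omega>)" by (rule qs_supp_closed)
next
  fix C assume "C \<in> \<C>"
  then show "analytic_in euclidean {\<omega>. qs_supp \<P> X \<omega> \<inter> C \<noteq> {}}"
    using analytic_part[OF P_pm graph_analytic C_open X_meas] by blast
qed


end
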